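(* Let $d,k\geq 2$ and $\epsilon\geq 1$, and let $G$ be a diregular $(d,k,+\epsilon)$-digraph. Then for every vertex $u$ of $G$, the multisets $O(N^+(u))$ and $N^+(O(u))$ are equal.
   Context: A digraph is $k$-geodetic if for every ordered pair of vertices $x,y$ there is at most one directed path from $x$ to $y$ of length at most $k$ (the trivial path of length $0$ counts). $M(d,k)=1+d+\dots+d^k$. A diregular $(d,k,+\epsilon)$-digraph is a $k$-geodetic digraph of order $M(d,k)+\epsilon$ in which every vertex has in-degree and out-degree exactly $d$. $N^+(x)$ is the set of out-neighbours of $x$; $d(x,y)$ is the directed distance; the outlier set of $x$ is $O(x)=\{y: d(x,y)\geq k+1\}$ (it has exactly $\epsilon$ elements). For a set $S$ of vertices, $N^+(S)$ denotes the multiset union $\biguplus_{x\in S}N^+(x)$ and $O(S)$ denotes the multiset union $\biguplus_{x\in S}O(x)$. *)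

theory Defs
  imports Main "HOL-Library.Multiset"
begin

text \<open>A walk is a nonempty list of vertices, consecutive ones joined by arcs; its length is
the number of arcs, i.e. length minus one.\<close>

definition is_walk :: "'a set \<Rightarrow> ('a \<Rightarrow> 'a \<Rightarrow> bool) \<Rightarrow> 'a list \<Rightarrow> bool" where
  "is_walk V E xs \<longleftrightarrow> xs \<noteq> [] \<and> set xs \<subseteq> V \<and>
     (\<forall>i. Suc i < length xs \<longrightarrow> E (xs ! i) (xs ! Suc i))"

definition walk_from_to :: "'a set \<Rightarrow> ('a \<Rightarrow> 'a \<Rightarrow> bool) \<Rightarrow> 'a \<Rightarrow> 'a \<Rightarrow> 'a list \<Rightarrow> bool" where
  "walk_from_to V E x y xs \<longleftrightarrow> is_walk V E xs \<and> hd xs = x \<and> last xs = y"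

definition k_geodetic :: "'a set \<Rightarrow> ('a \<Rightarrow> 'a \<Rightarrow> bool) \<Rightarrow> nat \<Rightarrow> bool" where
  "k_geodetic V E k \<longleftrightarrow> (\<forall>x\<in>V. \<forall>y\<in>V. \<forall>p q.
      walk_from_to V E x y p \<and> length p \<le> k + 1 \<and>
      walk_from_to V E x y q \<and> length q \<le> k + 1 \<longrightarrow> p = q)"

definition out_nbrs :: "'a set \<Rightarrow> ('a \<Rightarrow> 'a \<Rightarrow> bool) \<Rightarrow> 'a \<Rightarrow> 'a set" where
  "out_nbrs V E x = {y \<in> V. E x y}"

definition in_nbrs :: "'a set \<Rightarrow> ('a \<Rightarrow> 'a \<Rightarrow> bool) \<Rightarrow> 'a \<Rightarrow> 'a set" where
  "in_nbrs V E x = {y \<in> V. E y x}"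

text \<open>Outlier set: vertices at directed distance at least k+1 (including unreachable ones).\<close>
definition outliers :: "'a set \<Rightarrow> ('a \<Rightarrow> 'a \<Rightarrow> bool) \<Rightarrow> nat \<Rightarrow> 'a \<Rightarrow> 'a set" where
  "outliers V E k x = {y \<in> V. \<not> (\<exists>p. walk_from_to V E x y p \<and> length p \<le> k + 1)}"

definition moore_bound :: "nat \<Rightarrow> nat \<Rightarrow> nat" where
  "moore_bound d k = (\<Sum>i\<le>k. d ^ i)"

definition diregular_dke :: "'a set \<Rightarrow> ('a \<Rightarrow> 'a \<Rightarrow> bool) \<Rightarrow> nat \<Rightarrow> nat \<Rightarrow> nat \<Rightarrow> bool" where
  "diregular_dke V E d k \<epsilon> \<longleftrightarrow>
     finite V \<and> (\<forall>x y. E x y \<longrightarrow> x \<in> V \<and> y \<in> V) \<and>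
     k_geodetic V E k \<and> card V = moore_bound d k + \<epsilon> \<and>
     (\<forall>x\<in>V. card (out_nbrs V E x) = d \<and> card (in_nbrs V E x) = d)"

definition out_nbrs_mset :: "'a set \<Rightarrow> ('a \<Rightarrow> 'a \<Rightarrow> bool) \<Rightarrow> 'a set \<Rightarrow> 'a multiset" where
  "out_nbrs_mset V E S = (\<Sum>x\<in>S. mset_set (out_nbrs V E x))"

definition outliers_mset :: "'a set \<Rightarrow> ('a \<Rightarrow> 'a \<Rightarrow> bool) \<Rightarrow> nat \<Rightarrow> 'a set \<Rightarrow> 'a multiset" where
  "outliers_mset V E k S = (\<Sum>x\<in>S. mset_set (outliers V E k x))"

end

theory Submission
  imports Defs
begin

lemma walk_Cons: "xs \<noteq> [] \<Longrightarrow> is_walk V E (x#xs) \<longleftrightarrow> x\<in>V \<and> E x (hd xs) \<and> is_walk V E xs"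
  unfolding is_walk_def
  apply (auto simp: hd_conv_nth nth_Cons split: nat.splits)
  done

lemma walk_snoc: "xs \<noteq> [] \<Longrightarrow> is_walk V E (xs@[y]) \<longleftrightarrow> is_walk V E xs \<and> E (last xs) y \<and> y \<in> V"
  unfolding is_walk_def
  apply (auto simp: last_conv_nth nth_append)
  apply (subgoal_tac "i = length xs - Suc 0")
   apply simp
  apply linarith
  done

lemma cnt: "finite S \<Longrightarrow> (\<forall>x\<in>S. finite (F x)) \<Longrightarrow> count (\<Sum>x\<in>S. mset_set (F x)) v = card {x\<in>S. v \<in> F x}"
proof -
  assume a: "finite S" "\<forall>x\<in>S. finite (F x)"
  have "count (\<Sum>x\<in>S. mset_set (F x)) v = (\<Sum>x\<in>S. count (mset_set (F x)) v)"
    by (simp add: count_sum)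
  also have "\<dots> = (\<Sum>x\<in>S. if v \<in> F x then 1 else 0)"
    by (rule sum.cong) (use a in \<open>auto simp: count_mset_set\<close>)
  also have "\<dots> = card {x\<in>S. v \<in> F x}"
    using a by (simp add: sum.inter_filter[symmetric])
  finally show ?thesis .
qed

theorem lemma1:
  fixes V :: "'a set" and E :: "'a \<Rightarrow> 'a \<Rightarrow> bool" and d k \<epsilon> :: nat
  assumes "d \<ge> 2" and "k \<ge> 2" and "\<epsilon> \<ge> 1"
    and "diregular_dke V E d k \<epsilon>"
    and "u \<in> V"
  shows "outliers_mset V E k (out_nbrs V E u) = out_nbrs_mset V E (outliers V E k u)"
proof -
  from assms(4) have fin: "finite V" and kg: "k_geodetic V E k"
    and deg: "\<And>x. x \<in> V \<Longrightarrow> card (out_nbrs V E x) = d \<and> card (in_nbrs V E x) = d"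
    unfolding diregular_dke_def by auto
  have uniq: "p = q" if "walk_from_to V E x y p" "length p \<le> k+1"
    "walk_from_to V E x y q" "length q \<le> k+1" for x y p q
  proof -
    have "x \<in> V" "y \<in> V" using that(1) unfolding walk_from_to_def is_walk_def
      using hd_in_set last_in_set by blast+
    then show ?thesis using kg that unfolding k_geodetic_def by blast
  qed
  have finN: "finite (out_nbrs V E x)" for x using fin unfolding out_nbrs_def by auto
  have finO: "finite (outliers V E k x)" for x using fin unfolding outliers_def by auto
  have finI: "finite (in_nbrs V E x)" for x using fin unfolding in_nbrs_def by auto
  show ?thesis
  proof (rule multiset_eqI)
    fix v
    have L: "count (outliers_mset V E k (out_nbrs V E u)) v
        = card {x\<in>out_nbrs V E u. v \<in> outliers V E k x}"
      unfolding outliers_mset_def by (rule cnt) (use finN finO in auto)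
    have R: "count (out_nbrs_mset V E (outliers V E k u)) v
        = card {x\<in>outliers V E k u. v \<in> out_nbrs V E x}"
      unfolding out_nbrs_mset_def by (rule cnt) (use finN finO in auto)
    show "count (outliers_mset V E k (out_nbrs V E u)) v = count (out_nbrs_mset V E (outliers V E k u)) v"
    proof (cases "v \<in> V")
      case False
      then show ?thesis unfolding L R by (simp add: outliers_def out_nbrs_def)
    next
      case vV: True
      define A where "A = {x\<in>out_nbrs V E u. \<exists>p. walk_from_to V E x v p \<and> length p \<le> k+1}"
      define B where "B = {w\<in>in_nbrs V E v. \<exists>p. walk_from_to V E u w p \<and> length p \<le> k+1}"
      define W where "W = {p. walk_from_to V E u v p \<and> 2 \<le> length p \<and> length p \<le> k+2}"
      have bijA: "bij_betw (\<lambda>p. hd (tl p)) W A"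
      proof (rule bij_betwI')
        fix p q assume p: "p \<in> W" and q: "q \<in> W"
        obtain p' where p': "p = u # p'" "p' \<noteq> []" using p unfolding W_def walk_from_to_def
          by (cases p) force+
        obtain q' where q': "q = u # q'" "q' \<noteq> []" using q unfolding W_def walk_from_to_def
          by (cases q) force+
        have wp: "walk_from_to V E (hd p') v p'" "length p' \<le> k+1"
          using p p' unfolding W_def walk_from_to_def by (auto simp: walk_Cons Suc_le_eq)
        have wq: "walk_from_to V E (hd q') v q'" "length q' \<le> k+1"
          using q q' unfolding W_def walk_from_to_def by (auto simp: walk_Cons Suc_le_eq)
        show "(hd (tl p) = hd (tl q)) = (p = q)"
          using uniq[OF wp(1) wp(2), of q'] wq p' q' by auto
      next
        fix p assume p: "p \<in> W"
        obtain p' where p': "p = u # p'" "p' \<noteq> []" using p unfolding W_def walk_from_to_def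
          by (cases p) force+
        have wp0: "walk_from_to V E (hd p') v p'" "length p' \<le> k+1" "E u (hd p')"
          using p p' unfolding W_def walk_from_to_def
          by (auto simp: walk_Cons Suc_le_eq)
        have "hd p' \<in> V" using wp0(1) p'(2) unfolding walk_from_to_def is_walk_def
          using hd_in_set by blast
        note wp = wp0 this
        show "hd (tl p) \<in> A" unfolding A_def out_nbrs_def using wp p' by auto
      next
        fix x assume "x \<in> A"
        then obtain p where p: "walk_from_to V E x v p" "length p \<le> k+1" "E u x" "x \<in> V"
          unfolding A_def out_nbrs_def by auto
        have "p \<noteq> []" using p unfolding walk_from_to_def is_walk_def by auto
        then have "u # p \<in> W" using p assms(5) unfolding W_def walk_from_to_def
          by (auto simp: walk_Cons Suc_le_eq)
        moreover have "x = hd (tl (u # p))" using p unfolding walk_from_to_def by auto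
        ultimately show "\<exists>p\<in>W. x = hd (tl p)" by blast
      qed
      have bijB: "bij_betw (\<lambda>p. last (butlast p)) W B"
      proof (rule bij_betwI')
        fix p q assume p: "p \<in> W" and q: "q \<in> W"
        obtain p' where p': "p = p' @ [v]" "p' \<noteq> []" using p unfolding W_def walk_from_to_def
          by (cases p rule: rev_cases) force+
        obtain q' where q': "q = q' @ [v]" "q' \<noteq> []" using q unfolding W_def walk_from_to_def
          by (cases q rule: rev_cases) force+
        have wp: "walk_from_to V E u (last p') p'" "length p' \<le> k+1"
          using p p' unfolding W_def walk_from_to_def by (auto simp: walk_snoc Suc_le_eq)
        have wq: "walk_from_to V E u (last q') q'" "length q' \<le> k+1"
          using q q' unfolding W_def walk_from_to_def by (auto simp: walk_snoc Suc_le_eq)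
        show "(last (butlast p) = last (butlast q)) = (p = q)"
          using uniq[OF wp(1) wp(2), of q'] wq p' q' by auto
      next
        fix p assume p: "p \<in> W"
        obtain p' where p': "p = p' @ [v]" "p' \<noteq> []" using p unfolding W_def walk_from_to_def
          by (cases p rule: rev_cases) force+
        have wp0: "walk_from_to V E u (last p') p'" "length p' \<le> k+1" "E (last p') v"
          using p p' unfolding W_def walk_from_to_def
          by (auto simp: walk_snoc Suc_le_eq)
        have "last p' \<in> V" using wp0(1) p'(2) unfolding walk_from_to_def is_walk_def
          using last_in_set by blast
        note wp = wp0 this
        show "last (butlast p) \<in> B" unfolding B_def in_nbrs_def using wp p' by auto
      next
        fix x assume "x \<in> B"
        then obtain p where p: "walk_from_to V E u x p" "length p \<le> k+1" "E x v" "x \<in> V"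
          unfolding B_def in_nbrs_def by auto
        have "p \<noteq> []" using p unfolding walk_from_to_def is_walk_def by auto
        then have "p @ [v] \<in> W" using p vV unfolding W_def walk_from_to_def
          by (auto simp: walk_snoc Suc_le_eq)
        moreover have "x = last (butlast (p @ [v]))" using p unfolding walk_from_to_def by auto
        ultimately show "\<exists>p\<in>W. x = last (butlast p)" by blast
      qed
      have cAB: "card A = card B"
        using bij_betw_same_card[OF bijA] bij_betw_same_card[OF bijB] by simp
      have e1: "{x\<in>out_nbrs V E u. v \<in> outliers V E k x} = out_nbrs V E u - A"
        unfolding A_def outliers_def using vV by auto
      have e2: "{x\<in>outliers V E k u. v \<in> out_nbrs V E x} = in_nbrs V E v - B"
        unfolding B_def outliers_def in_nbrs_def out_nbrs_def using vV by auto
      have c1: "card (out_nbrs V E u - A) = d - card A"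
        using deg[OF assms(5)] finN by (subst card_Diff_subset) (auto simp: A_def intro: finite_subset)
      have c2: "card (in_nbrs V E v - B) = d - card B"
        using deg[OF vV] finI by (subst card_Diff_subset) (auto simp: B_def intro: finite_subset)
      show ?thesis unfolding L R e1 e2 c1 c2 cAB ..
    qed
  qed
qed

end
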